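(* Let $k\ge 3$, let $w\in\mathbb{C}^k$ with $w_i\neq 0$ for all $i\in\{1,\ldots,k\}$, and let $a=(a_{ij})\in M_k(\mathbb{C})$ be positive semidefinite with $a_{ij}=w_i\overline{w_j}$ for all $i,j$ with $|i-j|\le 1$. Then $a_{ij}=w_i\overline{w_j}$ for all $i,j\in\{1,\ldots,k\}$. *)

theory Defs
  imports "HOL-Analysis.Analysis"
begin

text \<open>A k x k complex matrix is represented by a function nat => nat => complex,
  with entries indexed by {1..k}.\<close>

definition psd_mat :: "nat \<Rightarrow> (nat \<Rightarrow> nat \<Rightarrow> complex) \<Rightarrow> bool" where
  "psd_mat k a \<longleftrightarrow>
     (\<forall>i\<in>{1..k}. \<forall>j\<in>{1..k}. a j i = cnj (a i j)) \<and>
     (\<forall>x :: nat \<Rightarrow> complex.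
        Im (\<Sum>i=1..k. \<Sum>j=1..k. cnj (x i) * a i j * x j) = 0 \<and>
        Re (\<Sum>i=1..k. \<Sum>j=1..k. cnj (x i) * a i j * x j) \<ge> 0)"

end

theory Submission
  imports Defs
begin

lemma sum3:
  fixes g :: "nat \<Rightarrow> complex"
  assumes "p\<in>{1..k}" "q\<in>{1..k}" "r\<in>{1..k}" "\<forall>n\<in>{1..k}. n\<notin>{p,q,r} \<longrightarrow> g n = 0"
  shows "(\<Sum>n=1..k. g n) = (\<Sum>n\<in>{p,q,r}. g n)"
  using assms by (intro sum.mono_neutral_right) auto

lemma quad3:
  fixes a :: "nat \<Rightarrow> nat \<Rightarrow> complex"
  assumes "p\<in>{1..k}" "q\<in>{1..k}" "r\<in>{1..k}" "p\<noteq>q" "p\<noteq>r" "q\<noteq>r"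
    and x: "x = (\<lambda>n. if n=p then \<alpha> else if n=q then \<beta> else if n=r then \<gamma> else 0)"
  shows "(\<Sum>i=1..k. \<Sum>j=1..k. cnj (x i) * a i j * x j) =
     cnj \<alpha> * a p p * \<alpha> + cnj \<alpha> * a p q * \<beta> + cnj \<alpha> * a p r * \<gamma>
   + cnj \<beta> * a q p * \<alpha> + cnj \<beta> * a q q * \<beta> + cnj \<beta> * a q r * \<gamma>
   + cnj \<gamma> * a r p * \<alpha> + cnj \<gamma> * a r q * \<beta> + cnj \<gamma> * a r r * \<gamma>" (is "_ = ?R")
proof -
  have "(\<Sum>i=1..k. \<Sum>j=1..k. cnj (x i) * a i j * x j) = (\<Sum>i\<in>{p,q,r}. \<Sum>j=1..k. cnj (x i) * a i j * x j)"
    by (rule sum3[OF assms(1-3)]) (simp add: x)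
  also have "\<dots> = (\<Sum>i\<in>{p,q,r}. \<Sum>j\<in>{p,q,r}. cnj (x i) * a i j * x j)"
    by (intro sum.cong refl sum3[OF assms(1-3)]) (simp add: x)
  also have "\<dots> = ?R" using assms(4-6) by (simp add: x algebra_simps)
  finally show ?thesis .
qed

lemma key:
  fixes A wi wi1 wj ajj :: complex and t :: real
  shows "cnj (cnj (wi1)) * (wi * cnj wi) * cnj wi1 + cnj (cnj (wi1)) * (wi * cnj wi1) * (- cnj wi)
    + cnj (cnj (wi1)) * cnj A * s
    + cnj (- cnj wi) * (wi1 * cnj wi) * cnj wi1 + cnj (- cnj wi) * (wi1 * cnj wi1) * (- cnj wi)
    + cnj (- cnj wi) * (wi1 * cnj wj) * s
    + cnj s * A * cnj wi1 + cnj s * (wj * cnj wi1) * (- cnj wi) + cnj s * (wj * cnj wj) * s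
    = cnj s * (cnj wi1 * (A - wj * cnj wi)) + s * cnj (cnj wi1 * (A - wj * cnj wi)) + s * cnj s * (wj * cnj wj)"
  by (simp add: algebra_simps)

lemma neg_lemma:
  fixes c wj :: complex
  assumes "c \<noteq> 0"
  defines "t \<equiv> 1 / ((cmod wj)^2 + 1)"
  defines "s \<equiv> - (complex_of_real t * c)"
  shows "Re (cnj s * c + s * cnj c + s * cnj s * (wj * cnj wj)) < 0"
proof -
  have cc: "c * cnj c = of_real ((cmod c)^2)" by (rule complex_norm_square[symmetric])
  have ww: "wj * cnj wj = of_real ((cmod wj)^2)" by (rule complex_norm_square[symmetric])
  have "cnj s * c + s * cnj c + s * cnj s * (wj * cnj wj)
      = of_real ((cmod c)^2 * (t^2 * (cmod wj)^2 - 2 * t))"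
  proof -
    have "cnj s * c + s * cnj c + s * cnj s * (wj * cnj wj)
       = (of_real t)^2 * (c * cnj c) * (wj * cnj wj) - 2 * of_real t * (c * cnj c)"
      unfolding s_def by (simp add: algebra_simps power2_eq_square)
    also have "\<dots> = of_real ((cmod c)^2 * (t^2 * (cmod wj)^2 - 2 * t))"
      unfolding cc ww by (simp add: algebra_simps)
    finally show ?thesis .
  qed
  moreover have "(cmod c)^2 > 0" using assms(1) by simp
  moreover have "t^2 * (cmod wj)^2 - 2 * t < 0"
  proof -
    have pos: "(cmod wj)^2 + 1 > 0" by (smt (verit) zero_le_power2)
    have tp: "t > 0" unfolding t_def using pos by simp
    have "t * (cmod wj)^2 < 1" unfolding t_def using pos by (simp add: field_simps)
    hence "t * (t * (cmod wj)^2) < t * 2" using tp by (intro mult_strict_left_mono) auto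
    thus ?thesis by (simp add: power2_eq_square algebra_simps)
  qed
  ultimately show ?thesis by (simp add: mult_pos_neg)
qed

theorem lemma4p12:
  fixes k :: nat and w :: "nat \<Rightarrow> complex" and a :: "nat \<Rightarrow> nat \<Rightarrow> complex"
  assumes "k \<ge> 3"
    and "\<forall>i\<in>{1..k}. w i \<noteq> 0"
    and "psd_mat k a"
    and "\<forall>i\<in>{1..k}. \<forall>j\<in>{1..k}. (i \<le> j + 1 \<and> j \<le> i + 1) \<longrightarrow> a i j = w i * cnj (w j)"
  shows "\<forall>i\<in>{1..k}. \<forall>j\<in>{1..k}. a i j = w i * cnj (w j)"
proof -
  note wnz = assms(2) and band = assms(4)
  have herm: "\<And>i j. i\<in>{1..k} \<Longrightarrow> j\<in>{1..k} \<Longrightarrow> a j i = cnj (a i j)"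
    using assms(3) unfolding psd_mat_def by blast
  have nonneg: "\<And>x. Re (\<Sum>i=1..k. \<Sum>j=1..k. cnj (x i) * a i j * x j) \<ge> 0"
    using assms(3) unfolding psd_mat_def by blast
  have low: "\<forall>i j. 1 \<le> i \<longrightarrow> j \<le> k \<longrightarrow> j = i + d \<longrightarrow> a j i = w j * cnj (w i)" for d
  proof (induction d rule: less_induct)
    case (less d)
    show ?case
    proof (intro allI impI)
      fix i j assume i1: "1 \<le> i" and jk: "j \<le> k" and jd: "j = i + d"
      show "a j i = w j * cnj (w i)"
      proof (cases "d \<le> 1")
        case True
        then show ?thesis using band i1 jk jd by auto
      next
        case False
        define q where "q = Suc i"
        have iK: "i \<in> {1..k}" "q \<in> {1..k}" "j \<in> {1..k}" using i1 jk jd False q_def by auto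
        have dist: "i \<noteq> q" "i \<noteq> j" "q \<noteq> j" using False jd q_def by auto
        have ajq: "a j q = w j * cnj (w q)" using less.IH[of "d - 1"] False jd q_def i1 jk
          by auto
        have aqj: "a q j = w q * cnj (w j)" using herm[OF iK(3) iK(2)] ajq by simp
        have aij: "a i j = cnj (a j i)" using herm[OF iK(3) iK(1)] by simp
        have aii: "a i i = w i * cnj (w i)" using band iK by auto
        have aiq: "a i q = w i * cnj (w q)" using band iK q_def by auto
        have aqi: "a q i = w q * cnj (w i)" using band iK q_def by auto
        have aqq: "a q q = w q * cnj (w q)" using band iK by auto
        have ajj: "a j j = w j * cnj (w j)" using band iK by auto
        define c where "c = cnj (w q) * (a j i - w j * cnj (w i))"
        have "c = 0"
        proof (rule ccontr)
          assume cnz: "c \<noteq> 0"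
          define t where "t = 1 / ((cmod (w j))^2 + 1)"
          define s where "s = - (complex_of_real t * c)"
          define x where "x = (\<lambda>n. if n=i then cnj (w q) else if n=q then - cnj (w i) else if n=j then s else 0)"
          have "(\<Sum>i=1..k. \<Sum>j=1..k. cnj (x i) * a i j * x j) =
             cnj s * c + s * cnj c + s * cnj s * (w j * cnj (w j))"
            unfolding quad3[OF iK dist x_def] aii aiq aqi aqq ajj aqj aij ajq c_def
            by (rule key)
          moreover have "Re (cnj s * c + s * cnj c + s * cnj s * (w j * cnj (w j))) < 0"
            unfolding s_def t_def by (rule neg_lemma[OF cnz])
          ultimately show False using nonneg[of x] by simp
        qed
        moreover have "w q \<noteq> 0" using wnz iK by auto
        ultimately show ?thesis unfolding c_def by simp
      qed
    qed
  qed
  show ?thesis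
  proof (intro ballI)
    fix i j assume i: "i \<in> {1..k}" and j: "j \<in> {1..k}"
    show "a i j = w i * cnj (w j)"
    proof (cases "j \<le> i")
      case True
      then show ?thesis using low[of "i - j"] i j by auto
    next
      case False
      have "a j i = w j * cnj (w i)" using low[of "j - i"] i j False by auto
      then show ?thesis using herm[OF j i] by (simp add: mult.commute)
    qed
  qed
qed

end
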